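(* Let $\Bbbk$ be a field, $R=\Bbbk[x_1,\dots,x_m]$ with the standard $\mathbb Z^m$-grading, and let $I\subseteq R$ be a monomial ideal with minimal monomial generating set $S=\{s_1,\dots,s_n\}$. Suppose that $R/I$ is of generic type. Then the algebraic Scarf complex $F_{\Delta}$ of $I$ is a minimal free multigraded resolution of $R/I$.
   Context: For $A\subseteq S$ let $m_A$ denote the least common multiple of the monomials in $A$ (with $m_\emptyset=1$), and identify monomials with their exponent vectors in $\mathbb Z^m$. The LCM-lattice $\Lambda$ is the set $\{m_A : \emptyset\ne A\subseteq S\}$. An element $\alpha\in\Lambda$ is called generic if the set $\{A\subseteq S : m_A=\alpha\}$ is a closed interval in the Boolean lattice of subsets of $S$, i.e. there are sets $I_\alpha\subseteq I^\alpha$ with $\{A : m_A=\alpha\}=\{A : I_\alpha\subseteq A\subseteq I^\alpha\}$. $R/I$ is of generic type if every element of $\Lambda$ is generic. The Scarf complex is $\Delta=\{A\subseteq S : m_B\neq m_A \text{ for all } B\subseteq S,\ B\ne A\}$ (a simplicial complex). Fix a total order on $S$. The algebraic Scarf complex $F_\Delta$ is the complex of free multigraded $R$-modules whose homological degree $i$ term has basis $\{e_A : A\in\Delta, |A|=i\}$ with $e_A$ of multidegree $m_A$, and differential $\partial(e_A)=\sum_{s\in A}\operatorname{sign}(s,A)\,\frac{m_A}{m_{A\setminus\{s\}}}\,e_{A\setminus\{s\}}$, where $\operatorname{sign}(s,A)=(-1)^{j+1}$ if $s$ is the $j$-th element of $A$; it is augmented to $R/I$ via $e_\emptyset\mapsto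 1$. *)

theory Defs
  imports "HOL-Library.Poly_Mapping"
begin

text \<open>Monomials in the variables of the finite type 'v are identified with their
exponent vectors, of type (v =>0 nat).  The polynomial ring
R = k[x_v : v in v] is the type of finitely supported maps from exponents to k
(finitely supported coefficient functions, convolution product).\<close>

type_synonym 'v expo = "'v \<Rightarrow>\<^sub>0 nat"
type_synonym ('v, 'k) mpoly = "'v expo \<Rightarrow>\<^sub>0 'k"

definition monom :: "'v expo \<Rightarrow> ('v, 'k::field) mpoly" where
  "monom a = Poly_Mapping.single a 1"

definition mlcm :: "'v expo set \<Rightarrow> 'v expo" where
  "mlcm A = Abs_poly_mapping (\<lambda>v. if A = {} then 0 else Max ((\<lambda>a. Poly_Mapping.lookup a v) ` A))"

definition mdvd :: "'v expo \<Rightarrow> 'v expo \<Rightarrow> bool" where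
  "mdvd a b \<longleftrightarrow> (\<forall>v. Poly_Mapping.lookup a v \<le> Poly_Mapping.lookup b v)"

definition minimal_mon_gens :: "'v expo set \<Rightarrow> bool" where
  "minimal_mon_gens S \<longleftrightarrow> finite S \<and> (\<forall>s\<in>S. \<forall>t\<in>S. mdvd s t \<longrightarrow> s = t)"

definition mon_ideal :: "'v expo set \<Rightarrow> ('v, 'k::field) mpoly set" where
  "mon_ideal S = {(\<Sum>s\<in>S. q s * monom s) | q. True}"

definition lcm_lattice :: "'v expo set \<Rightarrow> 'v expo set" where
  "lcm_lattice S = {mlcm A | A. A \<noteq> {} \<and> A \<subseteq> S}"

definition generic_elem :: "'v expo set \<Rightarrow> 'v expo \<Rightarrow> bool" where
  "generic_elem S \<alpha> \<longleftrightarrow>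
     (\<exists>Ilow Iup. {A. A \<subseteq> S \<and> mlcm A = \<alpha>} = {A. Ilow \<subseteq> A \<and> A \<subseteq> Iup})"

definition generic_type :: "'v expo set \<Rightarrow> bool" where
  "generic_type S \<longleftrightarrow> (\<forall>\<alpha>\<in>lcm_lattice S. generic_elem S \<alpha>)"

definition scarf :: "'v expo set \<Rightarrow> 'v expo set set" where
  "scarf S = {A. A \<subseteq> S \<and> (\<forall>B. B \<subseteq> S \<and> B \<noteq> A \<longrightarrow> mlcm B \<noteq> mlcm A)}"

text \<open>A total order on S is given by an injective ranking ord :: expo => nat.
 sign(s,A) = (-1)^(j+1) where s is the j-th element of A, i.e. (-1)^(number of
 elements of A preceding s).\<close>
definition sgn_in :: "('v expo \<Rightarrow> nat) \<Rightarrow> 'v expo \<Rightarrow> 'v expo set \<Rightarrow> 'k::field" where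
  "sgn_in ord s A = (-1) ^ card {t\<in>A. ord t < ord s}"

text \<open>Homological degree i term of the algebraic Scarf complex: the free R-module
 with basis e_A (A in the Scarf complex, |A| = i), represented by coefficient vectors.\<close>
definition scarf_mod :: "'v expo set \<Rightarrow> nat \<Rightarrow> ('v expo set \<Rightarrow> ('v, 'k::field) mpoly) set" where
  "scarf_mod S i = {f. \<forall>A. f A \<noteq> 0 \<longrightarrow> A \<in> scarf S \<and> card A = i}"

definition scarf_diff :: "'v expo set \<Rightarrow> ('v expo \<Rightarrow> nat) \<Rightarrow> nat
     \<Rightarrow> ('v expo set \<Rightarrow> ('v, 'k::field) mpoly) \<Rightarrow> ('v expo set \<Rightarrow> ('v, 'k) mpoly)" where
  "scarf_diff S ord i f = (\<lambda>B. \<Sum>A\<in>{A\<in>scarf S. card A = i}.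
      (\<Sum>s\<in>A. if B = A - {s}
               then Poly_Mapping.single 0 (sgn_in ord s A) * monom (mlcm A - mlcm (A - {s})) * f A
               else 0))"

text \<open>F_Delta (with augmentation e_{} |-> 1 to R/I) is a minimal free resolution of R/I:
 (1) e_{} exists (so the augmentation F_0 -> R/I is surjective) and the kernel of the
     augmentation equals the image of d_1;
 (2) exactness at F_i for all i >= 1;
 (3) minimality: the image of every differential lies in m F, m = (x_1,...,x_m),
     i.e. all coordinates of images have zero constant term.\<close>
definition scarf_is_min_resolution :: "'k::field itself \<Rightarrow> 'v expo set \<Rightarrow> ('v expo \<Rightarrow> nat) \<Rightarrow> bool" where
  "scarf_is_min_resolution _ S ord \<longleftrightarrow>
     {} \<in> scarf S
   \<and> {f \<in> scarf_mod S 0. f {} \<in> (mon_ideal S :: ('v, 'k) mpoly set)}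
       = scarf_diff S ord 1 ` (scarf_mod S 1 :: ('v expo set \<Rightarrow> ('v, 'k) mpoly) set)
   \<and> (\<forall>i\<ge>1. {f \<in> (scarf_mod S i :: ('v expo set \<Rightarrow> ('v, 'k) mpoly) set). scarf_diff S ord i f = (\<lambda>_. 0)}
             = scarf_diff S ord (Suc i) ` scarf_mod S (Suc i))
   \<and> (\<forall>i. \<forall>f \<in> (scarf_mod S (Suc i) :: ('v expo set \<Rightarrow> ('v, 'k) mpoly) set).
          \<forall>B. Poly_Mapping.lookup (scarf_diff S ord (Suc i) f B) 0 = 0)"

end

theory Submission
  imports Defs "HOL-Library.Disjoint_Sets"
begin


lemma expo_eq_add_iff:
  fixes a g q :: "'v expo"
  shows "(g = a + q) \<longleftrightarrow> (mdvd a g \<and> q = g - a)"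
  unfolding mdvd_def poly_mapping_eq_iff fun_eq_iff lookup_add lookup_minus
  by auto

lemma lookup_single_mult:
  fixes p :: "('v, 'k::field) mpoly"
  shows "Poly_Mapping.lookup (Poly_Mapping.single a c * p) g = (if mdvd a g then c * Poly_Mapping.lookup p (g - a) else 0)"
proof -
  have "Poly_Mapping.lookup (Poly_Mapping.single a c * p) g
      = (\<Sum>l. Poly_Mapping.lookup (Poly_Mapping.single a c) l * (\<Sum>q. Poly_Mapping.lookup p q when g = l + q))"
    by (simp only: lookup_mult)
  also have "\<dots> = (\<Sum>l. (c * (\<Sum>q. Poly_Mapping.lookup p q when g = l + q)) when l = a)"
    by (rule Sum_any.cong) (auto simp: lookup_single when_def)
  also have "\<dots> = c * (\<Sum>q. Poly_Mapping.lookup p q when g = a + q)" by simp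
  also have "(\<Sum>q. Poly_Mapping.lookup p q when g = a + q) = (if mdvd a g then Poly_Mapping.lookup p (g - a) else 0)"
  proof (cases "mdvd a g")
    case True
    have "(\<Sum>q. Poly_Mapping.lookup p q when g = a + q) = (\<Sum>q. Poly_Mapping.lookup p q when q = g - a)"
      by (rule Sum_any.cong) (simp add: expo_eq_add_iff True)
    then show ?thesis using True by simp
  next
    case False
    then show ?thesis by (simp add: expo_eq_add_iff)
  qed
  finally show ?thesis by simp
qed

lemma lookup_mlcm:
  fixes A :: "('v::finite) expo set"
  shows "Poly_Mapping.lookup (mlcm A) v = (if A = {} then 0 else Max ((\<lambda>a. Poly_Mapping.lookup a v) ` A))"
  unfolding mlcm_def by (subst lookup_Abs_poly_mapping) auto

lemma mlcm_empty [simp]: "mlcm {} = (0::('v::finite) expo)"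
  by (rule poly_mapping_eqI) (simp add: lookup_mlcm)

lemma mdvd_refl [simp]: "mdvd a a" by (simp add: mdvd_def)
lemma mdvd_trans: "mdvd a b \<Longrightarrow> mdvd b c \<Longrightarrow> mdvd a c"
  unfolding mdvd_def using order_trans by blast
lemma mdvd_antisym: "mdvd a b \<Longrightarrow> mdvd b a \<Longrightarrow> a = b"
  unfolding mdvd_def by (rule poly_mapping_eqI) (meson antisym)

lemma mdvd_mlcm_iff:
  fixes A :: "('v::finite) expo set"
  assumes "finite A"
  shows "mdvd (mlcm A) b \<longleftrightarrow> (\<forall>a\<in>A. mdvd a b)"
  using assms unfolding mdvd_def lookup_mlcm
  by (auto simp: Max_le_iff)

lemma mem_mdvd_mlcm:
  fixes A :: "('v::finite) expo set"
  assumes "finite A" "a \<in> A"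
  shows "mdvd a (mlcm A)"
  using assms unfolding mdvd_def lookup_mlcm by auto

lemma mlcm_mono:
  fixes A :: "('v::finite) expo set"
  assumes "finite B" "A \<subseteq> B"
  shows "mdvd (mlcm A) (mlcm B)"
  using assms finite_subset[OF assms(2,1)]
  by (auto simp: mdvd_mlcm_iff intro: mem_mdvd_mlcm)

lemma mlcm_insert_eq:
  fixes A :: "('v::finite) expo set"
  assumes "finite A" "mdvd s (mlcm A)"
  shows "mlcm (insert s A) = mlcm A"
  using assms
  by (intro mdvd_antisym) (auto simp: mdvd_mlcm_iff intro: mem_mdvd_mlcm mlcm_mono)

lemma mlcm_single [simp]: "mlcm {s} = (s::('v::finite) expo)"
  by (rule poly_mapping_eqI) (simp add: lookup_mlcm)

definition mdeg :: "('v::finite) expo \<Rightarrow> nat" where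
  "mdeg a = (\<Sum>v\<in>UNIV. Poly_Mapping.lookup a v)"

lemma mdeg_mono: "mdvd a b \<Longrightarrow> mdeg a \<le> mdeg b"
  unfolding mdvd_def mdeg_def by (intro sum_mono) auto

lemma mdeg_eq_imp_eq: "mdvd a b \<Longrightarrow> mdeg a = mdeg b \<Longrightarrow> a = b"
proof (rule ccontr)
  assume d: "mdvd a b" and e: "mdeg a = mdeg b" and ne: "a \<noteq> b"
  then obtain v where "Poly_Mapping.lookup a v \<noteq> Poly_Mapping.lookup b v"
    by (metis poly_mapping_eqI)
  with d have lt: "Poly_Mapping.lookup a v < Poly_Mapping.lookup b v" unfolding mdvd_def
    using le_neq_implies_less by blast
  have "mdeg a < mdeg b" unfolding mdeg_def
    by (rule sum_strict_mono_ex1) (use d lt in \<open>auto simp: mdvd_def\<close>)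
  with e show False by simp
qed

lemma scarf_sub: "A \<in> scarf S \<Longrightarrow> A \<subseteq> S"
  by (simp add: scarf_def)

lemma notin_scarf:
  "A \<subseteq> S \<Longrightarrow> A \<notin> scarf S \<Longrightarrow> \<exists>B. B \<subseteq> S \<and> B \<noteq> A \<and> mlcm B = mlcm A"
  by (auto simp: scarf_def)

lemma scarf_down:
  fixes S :: "('v::finite) expo set"
  assumes fin: "finite S" and B: "B \<in> scarf S" and AB: "A \<subseteq> B"
  shows "A \<in> scarf S"
proof (rule ccontr)
  assume nA: "A \<notin> scarf S"
  have BS: "B \<subseteq> S" using B by (simp add: scarf_def)
  have AS: "A \<subseteq> S" using AB BS by blast
  have finB: "finite B" using BS fin finite_subset by blast
  have finA: "finite A" using AS fin finite_subset by blast
  obtain A' where A': "A' \<subseteq> S" "A' \<noteq> A" "mlcm A' = mlcm A" using notin_scarf[OF AS nA] by blast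
  have finA': "finite A'" using A' fin finite_subset by blast
  have Bscarf: "\<And>C. C \<subseteq> S \<Longrightarrow> C \<noteq> B \<Longrightarrow> mlcm C \<noteq> mlcm B" using B by (auto simp: scarf_def)
  have "\<exists>s. s \<in> S \<and> mdvd s (mlcm A) \<and> ((s \<notin> A \<and> s \<in> A') \<or> (s \<in> A \<and> mdvd s (mlcm (A - {s}))))"
  proof (cases "A' \<subseteq> A")
    case False
    then obtain s where "s \<in> A'" "s \<notin> A" by blast
    moreover have "mdvd s (mlcm A)" using mem_mdvd_mlcm[OF finA' \<open>s \<in> A'\<close>] A'(3) by simp
    moreover have "s \<in> S" using A'(1) \<open>s \<in> A'\<close> by blast
    ultimately show ?thesis by blast
  next
    case True
    then obtain s where s: "s \<in> A" "s \<notin> A'" using A'(2) by blast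
    have "mdvd s (mlcm A)" using mem_mdvd_mlcm[OF finA s(1)] .
    moreover have "mdvd (mlcm A') (mlcm (A - {s}))"
      using True s by (intro mlcm_mono) (use finA in auto)
    ultimately have "mdvd s (mlcm (A - {s}))" using A'(3) mdvd_trans[of s "mlcm A" "mlcm (A - {s})"] by simp
    moreover have "s \<in> S" using s AS by blast
    ultimately show ?thesis using s \<open>mdvd s (mlcm A)\<close> by blast
  qed
  then obtain s where s: "s \<in> S" "mdvd s (mlcm A)"
     "(s \<notin> A \<and> s \<in> A') \<or> (s \<in> A \<and> mdvd s (mlcm (A - {s})))" by blast
  have sB: "mdvd s (mlcm B)" using mdvd_trans[OF s(2) mlcm_mono[OF finB AB]] .
  show False
  proof (cases "s \<in> B")
    case False
    have "mlcm (insert s B) = mlcm B" using mlcm_insert_eq[OF finB sB] .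
    moreover have "insert s B \<noteq> B" using False by blast
    ultimately show False using Bscarf[of "insert s B"] BS s(1) by blast
  next
    case True
    have sub: "A - {s} \<subseteq> B - {s}" using AB by blast
    have "mdvd s (mlcm (B - {s}))"
    proof (cases "s \<in> A")
      case False
      then have "A \<subseteq> B - {s}" using AB by blast
      moreover have "finite (B - {s})" using finB by simp
      ultimately show ?thesis using mdvd_trans[OF s(2) mlcm_mono[of "B - {s}" A]] by blast
    next
      case True
      then have "mdvd s (mlcm (A - {s}))" using s(3) by blast
      moreover have "finite (B - {s})" using finB by simp
      ultimately show ?thesis using mdvd_trans[OF _ mlcm_mono[OF _ sub]] by blast
    qed
    then have "mlcm (insert s (B - {s})) = mlcm (B - {s})" using finB by (intro mlcm_insert_eq) simp_all
    moreover have "insert s (B - {s}) = B" using True by blast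
    moreover have "B - {s} \<noteq> B" using True by blast
    moreover have "B - {s} \<subseteq> S" using BS by blast
    ultimately show False using Bscarf[of "B - {s}"] by simp
  qed
qed

lemma mlcm_eq_zero:
  fixes B :: "('v::finite) expo set"
  assumes "finite B" "B \<noteq> {}" "0 \<notin> B"
  shows "mlcm B \<noteq> 0"
proof
  assume z: "mlcm B = 0"
  obtain s where s: "s \<in> B" using assms by blast
  have "mdvd s 0" using mem_mdvd_mlcm[OF assms(1) s] z by simp
  then have "s = 0" by (intro mdvd_antisym) (auto simp: mdvd_def)
  with s assms show False by simp
qed

lemma empty_scarf:
  fixes S :: "('v::finite) expo set"
  assumes "finite S" "0 \<notin> S"
  shows "{} \<in> scarf S"
proof -
  { fix B assume B: "B \<subseteq> S" "B \<noteq> {}"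
    then have "finite B" using assms(1) finite_subset by blast
    moreover have "0 \<notin> B" using B assms(2) by blast
    ultimately have "mlcm B \<noteq> mlcm {}" using B mlcm_eq_zero by simp }
  then show ?thesis unfolding scarf_def by blast
qed

lemma single_scarf:
  fixes S :: "('v::finite) expo set"
  assumes mg: "minimal_mon_gens S" and z: "0 \<notin> S" and s: "s \<in> S"
  shows "{s} \<in> scarf S"
proof -
  have fin: "finite S" using mg by (simp add: minimal_mon_gens_def)
  { fix B assume B: "B \<subseteq> S" "B \<noteq> {s}" "mlcm B = s"
    have finB: "finite B" using B fin finite_subset by blast
    have "\<forall>b\<in>B. b = s"
      using B mem_mdvd_mlcm[OF finB] mg s unfolding minimal_mon_gens_def by (metis subsetD)
    then have "B \<subseteq> {s}" by blast
    then have "B = {}" using B(2) by (simp add: subset_singleton_iff)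
    then have False using B z s by simp }
  then show ?thesis unfolding scarf_def using s by auto
qed



definition kd :: "'v expo set \<Rightarrow> ('v expo \<Rightarrow> nat) \<Rightarrow> ('v expo set \<Rightarrow> 'k::field) \<Rightarrow> ('v expo set \<Rightarrow> 'k)" where
  "kd S ord g B = (if B \<subseteq> S then (\<Sum>s\<in>S - B. sgn_in ord s (insert s B) * g (insert s B)) else 0)"

lemma sgn_in_nz [simp]: "(sgn_in ord s A :: 'k::field) \<noteq> 0"
  by (simp add: sgn_in_def)

lemma sgn_swap_lt:
  assumes fin: "finite A" and r: "r \<in> A" and s: "s \<in> A" and lt: "ord s < ord r"
  shows "(sgn_in ord r (A - {s}) * sgn_in ord s A :: 'k::field)
       + sgn_in ord s (A - {r}) * sgn_in ord r A = 0"
proof -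
  have e1: "{t\<in>A. ord t < ord r} = insert s {t\<in>A - {s}. ord t < ord r}" using s lt by auto
  have c1: "card {t\<in>A. ord t < ord r} = Suc (card {t\<in>A - {s}. ord t < ord r})"
    unfolding e1 using fin by (subst card_insert_disjoint) auto
  have e2: "{t\<in>A. ord t < ord s} = {t\<in>A - {r}. ord t < ord s}" using lt by auto
  have "(sgn_in ord r A :: 'k) = - sgn_in ord r (A - {s})"
    unfolding sgn_in_def c1 by simp
  moreover have "(sgn_in ord s A :: 'k) = sgn_in ord s (A - {r})"
    unfolding sgn_in_def e2 by simp
  ultimately show ?thesis by simp
qed

lemma sgn_swap:
  assumes fin: "finite A" and r: "r \<in> A" and s: "s \<in> A" and ne: "ord s \<noteq> ord r"
  shows "(sgn_in ord r (A - {s}) * sgn_in ord s A :: 'k::field)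
       + sgn_in ord s (A - {r}) * sgn_in ord r A = 0"
proof (cases "ord s < ord r")
  case True
  then show ?thesis using sgn_swap_lt[OF fin r s] by blast
next
  case False
  then have "ord r < ord s" using ne by simp
  then show ?thesis using sgn_swap_lt[OF fin s r, of ord, where 'k='k] by (simp add: add.commute)
qed

lemma kd_kd:
  fixes S :: "'v expo set"
  assumes fin: "finite S" and inj: "inj_on ord S"
  shows "kd S ord (kd S ord (g :: 'v expo set \<Rightarrow> 'k::field)) C = 0"
proof (cases "C \<subseteq> S")
  case False then show ?thesis by (simp add: kd_def)
next
  case CS: True
  define f where "f = (\<lambda>(r, s). sgn_in ord r (insert r C) * (sgn_in ord s (insert s (insert r C))
        * g (insert s (insert r C))) :: 'k)"
  have "kd S ord (kd S ord g) C = (\<Sum>r\<in>S - C. \<Sum>s\<in>S - C - {r}. f (r, s))"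
    unfolding kd_def f_def using CS
    by (auto simp: sum_distrib_left intro!: sum.cong simp del: insert_Diff_single)
  also have "\<dots> = (\<Sum>x\<in>(SIGMA r:S - C. S - C - {r}). f x)"
    using fin by (subst sum.Sigma) auto
  also have "\<dots> = 0"
  proof (rule sum_involution_eq_0[where h = "\<lambda>(r, s). (s, r)"])
    fix x assume x: "x \<in> (SIGMA r:S - C. S - C - {r})"
    then obtain r s where rs: "x = (r, s)" "r \<in> S - C" "s \<in> S - C" "s \<noteq> r" by auto
    define A where "A = insert s (insert r C)"
    have finA: "finite A" unfolding A_def using CS fin finite_subset by blast
    have "ord s \<noteq> ord r" using inj rs by (meson DiffD1 inj_on_contraD)
    then have "(sgn_in ord r (A - {s}) * sgn_in ord s A :: 'k)
       + sgn_in ord s (A - {r}) * sgn_in ord r A = 0"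
      by (intro sgn_swap[OF finA]) (auto simp: A_def)
    moreover have "A - {s} = insert r C" "A - {r} = insert s C" "insert r (insert s C) = A"
      using rs unfolding A_def by auto
    ultimately show "f ((\<lambda>(r, s). (s, r)) x) + f x = 0"
      unfolding rs f_def by (simp add: algebra_simps A_def[symmetric])
         (metis add.commute distrib_left mult.assoc mult.commute mult_zero_right)
  qed auto
  finally show ?thesis .
qed



definition chains :: "'v expo set set \<Rightarrow> nat \<Rightarrow> ('v expo set \<Rightarrow> 'k::field) set" where
  "chains K i = {g. \<forall>A. g A \<noteq> 0 \<longrightarrow> A \<in> K \<and> card A = i}"

definition exact_at :: "'v expo set \<Rightarrow> ('v expo \<Rightarrow> nat) \<Rightarrow> 'v expo set set \<Rightarrow> nat \<Rightarrow> 'k::field itself \<Rightarrow> bool" where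
  "exact_at S ord K i _ \<longleftrightarrow> (\<forall>z \<in> (chains K i :: ('v expo set \<Rightarrow> 'k) set).
      kd S ord z = (\<lambda>_. 0) \<longrightarrow> (\<exists>w\<in>chains K (Suc i). kd S ord w = z))"

lemma chainsD: "g \<in> chains K i \<Longrightarrow> g A \<noteq> 0 \<Longrightarrow> A \<in> K \<and> card A = i"
  by (simp add: chains_def)

lemma chains_zero [simp]: "(\<lambda>_. 0) \<in> chains K i"
  by (simp add: chains_def)

lemma chains_diff:
  assumes "f \<in> chains K i" "g \<in> chains K i"
  shows "(\<lambda>A. f A - g A :: 'k::field) \<in> chains K i"
  unfolding chains_def mem_Collect_eq
proof (intro allI impI)
  fix A assume "f A - g A \<noteq> 0"
  then have "f A \<noteq> 0 \<or> g A \<noteq> 0" by auto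
  then show "A \<in> K \<and> card A = i" using assms chainsD by blast
qed

lemma chains_add:
  assumes "f \<in> chains K i" "g \<in> chains K i"
  shows "(\<lambda>A. f A + g A :: 'k::field) \<in> chains K i"
  unfolding chains_def mem_Collect_eq
proof (intro allI impI)
  fix A assume "f A + g A \<noteq> 0"
  then have "f A \<noteq> 0 \<or> g A \<noteq> 0" by auto
  then show "A \<in> K \<and> card A = i" using assms chainsD by blast
qed

lemma chains_mono: "f \<in> chains K i \<Longrightarrow> K \<subseteq> K2 \<Longrightarrow> f \<in> chains K2 i"
  unfolding chains_def by auto

lemma kd_zero [simp]: "kd S ord (\<lambda>_. 0::'k::field) = (\<lambda>_. 0)"
  by (simp add: kd_def fun_eq_iff)

lemma kd_diff: "kd S ord (\<lambda>A. f A - g A) B = kd S ord f B - (kd S ord g B :: 'k::field)"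
  by (simp add: kd_def sum_subtractf right_diff_distrib)

lemma kd_add: "kd S ord (\<lambda>A. f A + g A) B = kd S ord f B + (kd S ord g B :: 'k::field)"
  by (simp add: kd_def sum.distrib distrib_left)

lemma kd_chains:
  assumes fin: "finite S" and KS: "K \<subseteq> Pow S" and down: "\<And>A B. A \<in> K \<Longrightarrow> B \<subseteq> A \<Longrightarrow> B \<in> K"
    and g: "g \<in> chains K (Suc i)"
  shows "kd S ord (g :: 'v expo set \<Rightarrow> 'k::field) \<in> chains K i"
  unfolding chains_def mem_Collect_eq
proof (intro allI impI)
  fix B assume nz: "kd S ord g B \<noteq> 0"
  then have BS: "B \<subseteq> S" by (auto simp: kd_def split: if_splits)
  then have "(\<Sum>s\<in>S - B. sgn_in ord s (insert s B) * g (insert s B)) \<noteq> 0"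
    using nz by (simp add: kd_def)
  then obtain s where "s \<in> S - B" "sgn_in ord s (insert s B) * g (insert s B) \<noteq> 0"
    by (meson sum.neutral)
  then have s: "s \<in> S - B" "g (insert s B) \<noteq> 0" by auto
  then have "insert s B \<in> K" "card (insert s B) = Suc i" using chainsD[OF g] by auto
  moreover have "finite B" using BS fin finite_subset by blast
  ultimately show "B \<in> K \<and> card B = i" using down s by auto
qed

locale collapse =
  fixes S :: "'v expo set" and ord :: "'v expo \<Rightarrow> nat" and K K' :: "'v expo set set"
    and \<tau> :: "'v expo set \<Rightarrow> 'v expo"
  assumes fin: "finite S" and inj: "inj_on ord S"
    and KS: "K \<subseteq> Pow S" and down: "\<And>A B. A \<in> K \<Longrightarrow> B \<subseteq> A \<Longrightarrow> B \<in> K"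
    and K'K: "K' \<subseteq> K"
    and ca: "\<And>A. A \<in> K - K' \<Longrightarrow> \<tau> A \<notin> A \<Longrightarrow> \<tau> A \<in> S \<and> insert (\<tau> A) A \<in> K"
    and cb: "\<And>A. A \<in> K - K' \<Longrightarrow> \<tau> A \<in> A \<Longrightarrow> A - {\<tau> A} \<in> K - K' \<and> \<tau> (A - {\<tau> A}) = \<tau> A"
    and cc: "\<And>C s. C \<in> K - K' \<Longrightarrow> s \<in> S - C \<Longrightarrow> insert s C \<in> K
               \<Longrightarrow> insert s C \<in> K - K' \<and> \<tau> (insert s C) = \<tau> C"
begin

lemma finK: "A \<in> K \<Longrightarrow> finite A"
  using KS fin finite_subset by blast

lemma kill:
  assumes u: "u \<in> (chains K i :: ('v expo set \<Rightarrow> 'k::field) set)"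
  shows "\<exists>c\<in>chains K (Suc i). (\<lambda>A. u A - kd S ord c A) \<in> chains K i
          \<and> (\<forall>A\<in>K - K'. \<tau> A \<notin> A \<longrightarrow> u A - kd S ord c A = 0)"
proof -
  define c where "c = (\<lambda>D. if D \<in> K - K' \<and> \<tau> D \<in> D \<and> card D = Suc i
      then u (D - {\<tau> D}) / sgn_in ord (\<tau> D) D else 0)"
  have c: "c \<in> chains K (Suc i)" unfolding chains_def c_def by auto
  have kdc: "kd S ord c \<in> chains K i" by (rule kd_chains[OF fin KS down c])
  have diff: "(\<lambda>A. u A - kd S ord c A) \<in> chains K i"
    using chains_diff[OF u kdc] .
  have van: "u A - kd S ord c A = 0" if A: "A \<in> K - K'" "\<tau> A \<notin> A" for A
  proof -
    let ?t = "\<tau> A"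
    have tS: "?t \<in> S" and tK: "insert ?t A \<in> K" using ca[OF A] by auto
    have AS: "A \<subseteq> S" using A KS by auto
    have finA: "finite A" using A finK by auto
    have tKK: "insert ?t A \<in> K - K'" "\<tau> (insert ?t A) = ?t" using cc[OF A(1) _ tK] tS A(2) by auto
    have other: "c (insert s A) = 0" if s: "s \<in> S - A - {?t}" for s
    proof (rule ccontr)
      assume "c (insert s A) \<noteq> 0"
      then have h: "insert s A \<in> K - K'" "\<tau> (insert s A) \<in> insert s A" unfolding c_def by (auto split: if_splits)
      then have "\<tau> (insert s A) = ?t" using cc[OF A(1), of s] s by auto
      then show False using h s A(2) by auto
    qed
    have "kd S ord c A = sgn_in ord ?t (insert ?t A) * c (insert ?t A)
        + (\<Sum>s\<in>S - A - {?t}. sgn_in ord s (insert s A) * c (insert s A))"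
      unfolding kd_def using AS tS A(2) fin by (simp add: sum.remove[of _ ?t])
    also have "(\<Sum>s\<in>S - A - {?t}. sgn_in ord s (insert s A) * c (insert s A)) = 0"
      using other by (intro sum.neutral) auto
    also have "sgn_in ord ?t (insert ?t A) * c (insert ?t A) = u A"
    proof (cases "card A = i")
      case True
      then have "card (insert ?t A) = Suc i" using finA A(2) by simp
      moreover have "insert ?t A - {?t} = A" using A(2) by simp
      ultimately show ?thesis using tKK unfolding c_def by simp
    next
      case False
      then have "u A = 0" using chainsD[OF u, of A] by auto
      moreover have "card (insert ?t A) \<noteq> Suc i" using finA A(2) False by simp
      ultimately show ?thesis unfolding c_def by simp
    qed
    finally show ?thesis by simp
  qed
  show ?thesis using c diff van by blast
qed

lemma vanish:
  assumes u: "u \<in> (chains K i :: ('v expo set \<Rightarrow> 'k::field) set)"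
    and h1: "\<forall>A\<in>K - K'. \<tau> A \<notin> A \<longrightarrow> u A = 0"
    and h2: "\<forall>C\<in>K - K'. \<tau> C \<notin> C \<longrightarrow> kd S ord u C = 0"
  shows "u \<in> chains K' i"
  unfolding chains_def mem_Collect_eq
proof (intro allI impI)
  fix A assume nz: "u A \<noteq> 0"
  then have AK: "A \<in> K" and cA: "card A = i" using chainsD[OF u] by auto
  show "A \<in> K' \<and> card A = i"
  proof (rule ccontr)
    assume "\<not> (A \<in> K' \<and> card A = i)"
    then have AK': "A \<in> K - K'" using AK cA by auto
    let ?t = "\<tau> A"
    have tA: "?t \<in> A" using h1 AK' nz by auto
    define C where "C = A - {?t}"
    have C: "C \<in> K - K'" "\<tau> C = ?t" using cb[OF AK' tA] unfolding C_def by auto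
    have tC: "?t \<notin> C" unfolding C_def by auto
    have AS: "A \<subseteq> S" using AK KS by auto
    have CS: "C \<subseteq> S" using AS unfolding C_def by auto
    have tS: "?t \<in> S - C" using tA AS tC by auto
    have iA: "insert ?t C = A" unfolding C_def using tA by auto
    have other: "u (insert s C) = 0" if s: "s \<in> S - C - {?t}" for s
    proof (rule ccontr)
      assume nz': "u (insert s C) \<noteq> 0"
      then have "insert s C \<in> K" using chainsD[OF u] by auto
      then have "insert s C \<in> K - K'" "\<tau> (insert s C) = ?t" using cc[OF C(1), of s] s C(2) by auto
      moreover have "?t \<notin> insert s C" using s tC by auto
      ultimately show False using h1 nz' by auto
    qed
    have "kd S ord u C = sgn_in ord ?t (insert ?t C) * u (insert ?t C)
        + (\<Sum>s\<in>S - C - {?t}. sgn_in ord s (insert s C) * u (insert s C))"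
      unfolding kd_def using CS tS fin by (simp add: sum.remove[of _ ?t])
    also have "(\<Sum>s\<in>S - C - {?t}. sgn_in ord s (insert s C) * u (insert s C)) = 0"
      using other by (intro sum.neutral) auto
    finally have "kd S ord u C = sgn_in ord ?t A * u A" using iA by simp
    moreover have "kd S ord u C = 0" using h2 C tC by auto
    ultimately show False using nz by simp
  qed
qed

lemma exact_down:
  assumes ex: "exact_at S ord K i TYPE('k::field)"
  shows "exact_at S ord K' i TYPE('k)"
  unfolding exact_at_def
proof (intro ballI impI)
  fix z :: "'v expo set \<Rightarrow> 'k" assume z: "z \<in> chains K' i" and dz: "kd S ord z = (\<lambda>_. 0)"
  have zK: "z \<in> chains K i" using z K'K unfolding chains_def by auto
  obtain w where w: "w \<in> chains K (Suc i)" "kd S ord w = z"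
    using ex zK dz unfolding exact_at_def by blast
  obtain c where c: "c \<in> chains K (Suc (Suc i))" "(\<lambda>A. w A - kd S ord c A) \<in> chains K (Suc i)"
      "\<forall>A\<in>K - K'. \<tau> A \<notin> A \<longrightarrow> w A - kd S ord c A = 0"
    using kill[OF w(1)] by blast
  have dw1: "kd S ord (\<lambda>A. w A - kd S ord c A) = z"
    using w(2) by (simp add: fun_eq_iff kd_diff kd_kd[OF fin inj])
  have "(\<lambda>A. w A - kd S ord c A) \<in> chains K' (Suc i)"
  proof (rule vanish[OF c(2) c(3)])
    show "\<forall>C\<in>K - K'. \<tau> C \<notin> C \<longrightarrow> kd S ord (\<lambda>A. w A - kd S ord c A) C = 0"
      using dw1 z unfolding chains_def by auto
  qed
  then show "\<exists>w\<in>chains K' (Suc i). kd S ord w = z" using dw1 by blast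
qed

lemma exact_up:
  assumes ex: "exact_at S ord K' i TYPE('k::field)"
  shows "exact_at S ord K i TYPE('k)"
  unfolding exact_at_def
proof (intro ballI impI)
  fix z :: "'v expo set \<Rightarrow> 'k" assume z: "z \<in> chains K i" and dz: "kd S ord z = (\<lambda>_. 0)"
  obtain c where c: "c \<in> chains K (Suc i)" "(\<lambda>A. z A - kd S ord c A) \<in> chains K i"
      "\<forall>A\<in>K - K'. \<tau> A \<notin> A \<longrightarrow> z A - kd S ord c A = 0"
    using kill[OF z] by blast
  have dz1: "kd S ord (\<lambda>A. z A - kd S ord c A) = (\<lambda>_. 0)"
    using dz by (simp add: fun_eq_iff kd_diff kd_kd[OF fin inj])
  have z1: "(\<lambda>A. z A - kd S ord c A) \<in> chains K' i"
    by (rule vanish[OF c(2) c(3)]) (use dz1 in auto)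
  then obtain w where w: "w \<in> chains K' (Suc i)" "kd S ord w = (\<lambda>A. z A - kd S ord c A)"
    using ex dz1 unfolding exact_at_def by blast
  have "(\<lambda>A. w A + c A) \<in> chains K (Suc i)"
    using chains_add[OF chains_mono[OF w(1) K'K] c(1)] .
  moreover have "kd S ord (\<lambda>A. w A + c A) = z"
    using w(2) by (simp add: fun_eq_iff kd_add)
  ultimately show "\<exists>w\<in>chains K (Suc i). kd S ord w = z" by blast
qed

end



definition Kb :: "('v::finite) expo set \<Rightarrow> 'v expo \<Rightarrow> 'v expo set set" where
  "Kb S \<beta> = {A. A \<subseteq> S \<and> mdvd (mlcm A) \<beta>}"

definition Kn :: "('v::finite) expo set \<Rightarrow> 'v expo \<Rightarrow> nat \<Rightarrow> 'v expo set set" where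
  "Kn S \<beta> n = {A. A \<subseteq> S \<and> mdvd (mlcm A) \<beta> \<and> (A \<in> scarf S \<or> mdeg (mlcm A) < n)}"

definition tgood :: "('v::finite) expo set \<Rightarrow> 'v expo \<Rightarrow> 'v expo \<Rightarrow> bool" where
  "tgood S \<alpha> t \<longleftrightarrow> t \<in> S \<and> (\<forall>B. B \<subseteq> S \<and> mlcm B = \<alpha> \<longrightarrow> mlcm (insert t B) = \<alpha> \<and> mlcm (B - {t}) = \<alpha>)"

definition tsel :: "('v::finite) expo set \<Rightarrow> 'v expo \<Rightarrow> 'v expo" where
  "tsel S \<alpha> = (SOME t. tgood S \<alpha> t)"

lemma tgoodD:
  assumes "tgood S \<alpha> t" "B \<subseteq> S" "mlcm B = \<alpha>"
  shows "t \<in> S" "mlcm (insert t B) = \<alpha>" "mlcm (B - {t}) = \<alpha>"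
  using assms unfolding tgood_def by blast+

lemma tsel_ok:
  fixes S :: "('v::finite) expo set"
  assumes fin: "finite S" and z: "0 \<notin> S" and gen: "generic_type S"
    and AS: "A \<subseteq> S" and nA: "A \<notin> scarf S"
  shows "tgood S (mlcm A) (tsel S (mlcm A))"
proof -
  have "A \<noteq> {}" using empty_scarf[OF fin z] nA by auto
  then have "mlcm A \<in> lcm_lattice S" using AS unfolding lcm_lattice_def by auto
  then have "generic_elem S (mlcm A)" using gen unfolding generic_type_def by blast
  then obtain L U where LU: "{B. B \<subseteq> S \<and> mlcm B = mlcm A} = {B. L \<subseteq> B \<and> B \<subseteq> U}"
    unfolding generic_elem_def by blast
  have fib: "B \<subseteq> S \<and> mlcm B = mlcm A \<longleftrightarrow> L \<subseteq> B \<and> B \<subseteq> U" for B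
    using LU by (simp add: set_eq_iff)
  obtain A' where A': "A' \<subseteq> S" "A' \<noteq> A" "mlcm A' = mlcm A" using notin_scarf[OF AS nA] by blast
  have LA: "L \<subseteq> A \<and> A \<subseteq> U" using fib[of A] AS by simp
  have LA': "L \<subseteq> A' \<and> A' \<subseteq> U" using fib[of A'] A' by simp
  have "L \<noteq> U"
  proof
    assume "L = U"
    then have "A = L" "A' = L" using LA LA' by auto
    then show False using A'(2) by simp
  qed
  then obtain t where t: "t \<in> U" "t \<notin> L" using LA by blast
  have "U \<subseteq> S \<and> mlcm U = mlcm A" using fib[of U] LA by blast
  then have tS: "t \<in> S" using t by blast
  have "tgood S (mlcm A) t"
    unfolding tgood_def
  proof (intro conjI allI impI tS)
    fix B assume B: "B \<subseteq> S \<and> mlcm B = mlcm A"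
    then have LB: "L \<subseteq> B \<and> B \<subseteq> U" using fib[of B] by blast
    then have "L \<subseteq> insert t B \<and> insert t B \<subseteq> U" using t by blast
    then show "mlcm (insert t B) = mlcm A" using fib[of "insert t B"] by blast
    have "L \<subseteq> B - {t} \<and> B - {t} \<subseteq> U" using t LB by blast
    then show "mlcm (B - {t}) = mlcm A" using fib[of "B - {t}"] by blast
  qed
  then show ?thesis unfolding tsel_def by (rule someI)
qed

lemma exact_empty:
  fixes S :: "'v expo set"
  shows "exact_at S ord {} i TYPE('k::field)"
proof -
  have "z \<in> (chains {} i :: ('v expo set \<Rightarrow> 'k) set) \<Longrightarrow> z = (\<lambda>_. 0)" for z
    unfolding chains_def by auto
  note zz = this
  show ?thesis unfolding exact_at_def
  proof (intro ballI impI)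
    fix z :: "'v expo set \<Rightarrow> 'k" assume "z \<in> chains {} i"
    then have "z = (\<lambda>_. 0)" by (rule zz)
    then show "\<exists>w\<in>chains {} (Suc i). kd S ord w = z" by (intro bexI[of _ "\<lambda>_. 0"]) auto
  qed
qed

lemma base_exact:
  fixes S :: "('v::finite) expo set"
  assumes fin: "finite S" and inj: "inj_on ord S" and i: "i \<ge> 1"
  shows "exact_at S ord (Kb S \<beta>) i TYPE('k::field)"
proof (cases "\<exists>t\<in>S. mdvd t \<beta>")
  case False
  have "A = {}" if "A \<in> Kb S \<beta>" for A
  proof -
    have "A \<subseteq> S" "mdvd (mlcm A) \<beta>" using that by (auto simp: Kb_def)
    moreover have "finite A" using calculation fin finite_subset by blast
    ultimately show ?thesis using False mdvd_mlcm_iff by blast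
  qed
  then have "z \<in> (chains (Kb S \<beta>) i :: ('v expo set \<Rightarrow> 'k) set) \<Longrightarrow> z = (\<lambda>_. 0)" for z
    unfolding chains_def using i by fastforce
  note zz = this
  show ?thesis unfolding exact_at_def
  proof (intro ballI impI)
    fix z :: "'v expo set \<Rightarrow> 'k" assume "z \<in> chains (Kb S \<beta>) i"
    then have "z = (\<lambda>_. 0)" by (rule zz)
    then show "\<exists>w\<in>chains (Kb S \<beta>) (Suc i). kd S ord w = z" by (intro bexI[of _ "\<lambda>_. 0"]) auto
  qed
next
  case True
  then obtain t where t: "t \<in> S" "mdvd t \<beta>" by blast
  have down: "B \<in> Kb S \<beta>" if "A \<in> Kb S \<beta>" "B \<subseteq> A" for A B
  proof -
    have "A \<subseteq> S" "mdvd (mlcm A) \<beta>" using that by (auto simp: Kb_def)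
    moreover have "finite A" using calculation fin finite_subset by blast
    ultimately show ?thesis using that(2) mlcm_mono mdvd_trans unfolding Kb_def by blast
  qed
  interpret collapse S ord "Kb S \<beta>" "{}" "\<lambda>_. t"
  proof
    show "Kb S \<beta> \<subseteq> Pow S" by (auto simp: Kb_def)
  next
    fix A assume A: "A \<in> Kb S \<beta> - {}" "t \<notin> A"
    have "A \<subseteq> S" "mdvd (mlcm A) \<beta>" using A by (auto simp: Kb_def)
    moreover have "finite A" using calculation fin finite_subset by blast
    ultimately have "mdvd (mlcm (insert t A)) \<beta>"
      using t by (auto simp: mdvd_mlcm_iff)
    then show "t \<in> S \<and> insert t A \<in> Kb S \<beta>" using t \<open>A \<subseteq> S\<close> by (auto simp: Kb_def)
  qed (use fin inj down in auto)
  show ?thesis by (rule exact_up) (rule exact_empty)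
qed

lemma Kn_big:
  fixes S :: "('v::finite) expo set"
  assumes fin: "finite S"
  shows "Kn S \<beta> (Suc (mdeg \<beta>)) = Kb S \<beta>"
proof -
  have "mdvd (mlcm A) \<beta> \<Longrightarrow> mdeg (mlcm A) < Suc (mdeg \<beta>)" for A
    by (simp add: le_imp_less_Suc mdeg_mono)
  then show ?thesis unfolding Kn_def Kb_def by auto
qed

lemma step_exact:
  fixes S :: "('v::finite) expo set"
  assumes fin: "finite S" and z: "0 \<notin> S" and inj: "inj_on ord S" and gen: "generic_type S"
    and ex: "exact_at S ord (Kn S \<beta> (Suc n)) i TYPE('k::field)"
  shows "exact_at S ord (Kn S \<beta> n) i TYPE('k)"
proof -
  have finA: "finite A" if "A \<subseteq> S" for A using that fin finite_subset by blast
  have diffD: "A \<subseteq> S \<and> mdvd (mlcm A) \<beta> \<and> A \<notin> scarf S \<and> mdeg (mlcm A) = n"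
    if "A \<in> Kn S \<beta> (Suc n) - Kn S \<beta> n" for A using that unfolding Kn_def by auto
  have diffI: "A \<in> Kn S \<beta> (Suc n) - Kn S \<beta> n"
    if "A \<subseteq> S" "mdvd (mlcm A) \<beta>" "A \<notin> scarf S" "mdeg (mlcm A) = n" for A
    using that unfolding Kn_def by auto
  interpret collapse S ord "Kn S \<beta> (Suc n)" "Kn S \<beta> n" "\<lambda>A. tsel S (mlcm A)"
  proof
    show "Kn S \<beta> (Suc n) \<subseteq> Pow S" by (auto simp: Kn_def)
  next
    show "Kn S \<beta> n \<subseteq> Kn S \<beta> (Suc n)" by (auto simp: Kn_def)
  next
    fix A B assume A: "A \<in> Kn S \<beta> (Suc n)" and BA: "B \<subseteq> A"
    have AS: "A \<subseteq> S" and Ab: "mdvd (mlcm A) \<beta>" using A by (auto simp: Kn_def)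
    have m: "mdvd (mlcm B) (mlcm A)" using mlcm_mono[OF finA[OF AS] BA] .
    have "B \<in> scarf S \<or> mdeg (mlcm B) < Suc n"
    proof (cases "A \<in> scarf S")
      case True then show ?thesis using scarf_down[OF fin True BA] by blast
    next
      case False
      then have "mdeg (mlcm A) < Suc n" using A unfolding Kn_def by blast
      then show ?thesis using mdeg_mono[OF m] by linarith
    qed
    moreover have "mdvd (mlcm B) \<beta>" using mdvd_trans[OF m Ab] .
    moreover have "B \<subseteq> S" using AS BA by blast
    ultimately show "B \<in> Kn S \<beta> (Suc n)" unfolding Kn_def by blast
  next
    fix A assume A: "A \<in> Kn S \<beta> (Suc n) - Kn S \<beta> n" "tsel S (mlcm A) \<notin> A"
    note d = diffD[OF A(1)]
    have tg: "tgood S (mlcm A) (tsel S (mlcm A))" using tsel_ok[OF fin z gen] d by blast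
    let ?t = "tsel S (mlcm A)"
    have AS: "A \<subseteq> S" using d by blast
    have "?t \<in> S" "mlcm (insert ?t A) = mlcm A" using tgoodD(1,2)[OF tg AS refl] by auto
    moreover have "insert ?t A \<subseteq> S" using d calculation by blast
    ultimately show "?t \<in> S \<and> insert ?t A \<in> Kn S \<beta> (Suc n)" using d unfolding Kn_def by simp
  next
    fix A assume A: "A \<in> Kn S \<beta> (Suc n) - Kn S \<beta> n" "tsel S (mlcm A) \<in> A"
    note d = diffD[OF A(1)]
    have tg: "tgood S (mlcm A) (tsel S (mlcm A))" using tsel_ok[OF fin z gen] d by blast
    let ?t = "tsel S (mlcm A)"
    have AS: "A \<subseteq> S" using d by blast
    have e: "mlcm (A - {?t}) = mlcm A" using tgoodD(3)[OF tg AS refl] .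
    have ne: "A \<noteq> A - {?t}" using A(2) by blast
    have "A - {?t} \<notin> scarf S"
    proof
      assume "A - {?t} \<in> scarf S"
      then have "\<forall>B. B \<subseteq> S \<and> B \<noteq> A - {?t} \<longrightarrow> mlcm B \<noteq> mlcm (A - {?t})"
        by (simp add: scarf_def)
      then have "A \<subseteq> S \<and> A \<noteq> A - {?t} \<longrightarrow> mlcm A \<noteq> mlcm (A - {?t})" by (rule spec)
      then show False using ne e d by simp
    qed
    moreover have "A - {?t} \<subseteq> S" using d by blast
    moreover have "mdvd (mlcm (A - {?t})) \<beta>" unfolding e using d by blast
    moreover have "mdeg (mlcm (A - {?t})) = n" unfolding e using d by blast
    ultimately have "A - {?t} \<in> Kn S \<beta> (Suc n) - Kn S \<beta> n" by (intro diffI)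
    then show "A - {?t} \<in> Kn S \<beta> (Suc n) - Kn S \<beta> n \<and> tsel S (mlcm (A - {?t})) = ?t"
      using e by simp
  next
    fix C s assume C: "C \<in> Kn S \<beta> (Suc n) - Kn S \<beta> n" and s: "s \<in> S - C"
      and K: "insert s C \<in> Kn S \<beta> (Suc n)"
    note d = diffD[OF C]
    have ns: "insert s C \<notin> scarf S"
    proof
      assume "insert s C \<in> scarf S"
      then have "C \<in> scarf S" by (rule scarf_down[OF fin _ subset_insertI])
      then show False using d by simp
    qed
    then have lt: "mdeg (mlcm (insert s C)) < Suc n" using K unfolding Kn_def by auto
    have m: "mdvd (mlcm C) (mlcm (insert s C))"
      using s d by (intro mlcm_mono) (auto intro: finA)
    then have "mdeg (mlcm (insert s C)) = n" using mdeg_mono[OF m] lt d by simp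
    then have e: "mlcm C = mlcm (insert s C)" using mdeg_eq_imp_eq[OF m] d by simp
    have e': "mlcm (insert s C) = mlcm C" using e by simp
    have "insert s C \<subseteq> S" using s d by blast
    moreover have "mdvd (mlcm (insert s C)) \<beta>" unfolding e' using d by blast
    moreover have "mdeg (mlcm (insert s C)) = n" unfolding e' using d by blast
    ultimately have "insert s C \<in> Kn S \<beta> (Suc n) - Kn S \<beta> n"
      using ns by (intro diffI)
    then show "insert s C \<in> Kn S \<beta> (Suc n) - Kn S \<beta> n
          \<and> tsel S (mlcm (insert s C)) = tsel S (mlcm C)" using e by simp
  qed (rule fin, rule inj)
  show ?thesis by (rule exact_down[OF ex])
qed

lemma scarf_beta_exact:
  fixes S :: "('v::finite) expo set"
  assumes fin: "finite S" and z: "0 \<notin> S" and inj: "inj_on ord S" and gen: "generic_type S"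
    and i: "i \<ge> 1"
  shows "exact_at S ord (Kn S \<beta> 0) i TYPE('k::field)"
proof -
  have "0 \<le> Suc (mdeg \<beta>)" by simp
  then show ?thesis
  proof (induction rule: inc_induct)
    case base
    show ?case unfolding Kn_big[OF fin] by (rule base_exact[OF fin inj i])
  next
    case (step n)
    then show ?case using step_exact[OF fin z inj gen] by blast
  qed
qed



lemma pm_add_diff: "(g + m) - m = (g :: 'v expo)"
  by (rule poly_mapping_eqI) (simp add: lookup_add lookup_minus)
lemma pm_diff_add: "mdvd m b \<Longrightarrow> (b - m) + m = (b :: 'v expo)"
  unfolding mdvd_def by (intro poly_mapping_eqI) (simp add: lookup_add lookup_minus)
lemma pm_mdvd_add: "mdvd m (g + (m :: 'v expo))"
  unfolding mdvd_def by (simp add: lookup_add)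
lemma pm_diff_inj:
  assumes "mdvd m b" "mdvd m b'" "b - m = b' - m" shows "b = (b' :: 'v expo)"
proof -
  have "b = (b - m) + m" using pm_diff_add[OF assms(1)] by simp
  also have "\<dots> = (b' - m) + m" using assms(3) by simp
  also have "\<dots> = b'" using pm_diff_add[OF assms(2)] .
  finally show ?thesis .
qed
lemma pm_sub1:
  assumes "mdvd b a" "mdvd b c" shows "mdvd (a - b) (c - b) \<longleftrightarrow> mdvd a (c :: 'v expo)"
proof -
  have "(Poly_Mapping.lookup a v - Poly_Mapping.lookup b v \<le> Poly_Mapping.lookup c v - Poly_Mapping.lookup b v)
      \<longleftrightarrow> Poly_Mapping.lookup a v \<le> Poly_Mapping.lookup c v" for v
  proof -
    have "Poly_Mapping.lookup b v \<le> Poly_Mapping.lookup a v" "Poly_Mapping.lookup b v \<le> Poly_Mapping.lookup c v"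
      using assms unfolding mdvd_def by auto
    then show ?thesis by arith
  qed
  then show ?thesis unfolding mdvd_def lookup_minus by simp
qed
lemma pm_sub2: "mdvd b a \<Longrightarrow> mdvd a c \<Longrightarrow> (c - b) - (a - b) = c - (a :: 'v expo)"
  unfolding mdvd_def by (intro poly_mapping_eqI) (simp add: lookup_minus)
lemma pm_zero_mdvd: "a - b = 0 \<Longrightarrow> mdvd a (b :: 'v expo)"
proof -
  assume "a - b = 0"
  then have "Poly_Mapping.lookup (a - b) v = 0" for v by simp
  then show ?thesis unfolding mdvd_def lookup_minus by simp
qed
lemma pm_mdvd_zero: "mdvd d 0 \<Longrightarrow> d = (0 :: 'v expo)"
  by (intro mdvd_antisym) (auto simp: mdvd_def)

definition cf :: "('v expo set \<Rightarrow> ('v, 'k::field) mpoly) \<Rightarrow> ('v::finite) expo \<Rightarrow> ('v expo set \<Rightarrow> 'k)" where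
  "cf f \<beta> A = (if mdvd (mlcm A) \<beta> then Poly_Mapping.lookup (f A) (\<beta> - mlcm A) else 0)"

lemma cf_inj:
  fixes f g :: "('v::finite) expo set \<Rightarrow> ('v, 'k::field) mpoly"
  assumes "\<And>\<beta> A. cf f \<beta> A = cf g \<beta> A"
  shows "f = g"
proof
  fix A show "f A = g A"
  proof (rule poly_mapping_eqI)
    fix \<gamma>
    have "cf f (\<gamma> + mlcm A) A = cf g (\<gamma> + mlcm A) A" by (rule assms)
    then show "Poly_Mapping.lookup (f A) \<gamma> = Poly_Mapping.lookup (g A) \<gamma>"
      unfolding cf_def by (simp add: pm_mdvd_add pm_add_diff)
  qed
qed

lemma pow_sum_conv:
  fixes F :: "'a \<Rightarrow> 'a set \<Rightarrow> 'b::comm_monoid_add"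
  assumes fin: "finite S"
  shows "(\<Sum>A\<in>Pow S. \<Sum>s\<in>A. if B = A - {s} then F s A else 0)
       = (if B \<subseteq> S then (\<Sum>s\<in>S - B. F s (insert s B)) else 0)"
proof (cases "B \<subseteq> S")
  case False
  have "(\<Sum>s\<in>A. if B = A - {s} then F s A else 0) = 0" if "A \<in> Pow S" for A
    using that False by (intro sum.neutral) auto
  then show ?thesis using False by simp
next
  case True
  have finP: "\<And>A. A \<in> Pow S \<Longrightarrow> finite A" using fin finite_subset by blast
  have "(\<Sum>A\<in>Pow S. \<Sum>s\<in>A. if B = A - {s} then F s A else 0)
      = (\<Sum>A\<in>Pow S. \<Sum>s\<in>S. if s \<in> A \<and> B = A - {s} then F s A else 0)"
  proof (rule sum.cong[OF refl])
    fix A assume A: "A \<in> Pow S"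
    have "(\<Sum>s\<in>A. if B = A - {s} then F s A else 0) = (\<Sum>s\<in>S \<inter> A. if B = A - {s} then F s A else 0)"
      using A by (simp add: Int_absorb1)
    also have "\<dots> = (\<Sum>s\<in>S. if s \<in> A then (if B = A - {s} then F s A else 0) else 0)"
      using fin by (rule sum.inter_restrict)
    also have "\<dots> = (\<Sum>s\<in>S. if s \<in> A \<and> B = A - {s} then F s A else 0)"
      by (rule sum.cong) auto
    finally show "(\<Sum>s\<in>A. if B = A - {s} then F s A else 0) = (\<Sum>s\<in>S. if s \<in> A \<and> B = A - {s} then F s A else 0)" .
  qed
  also have "\<dots> = (\<Sum>s\<in>S. \<Sum>A\<in>Pow S. if s \<in> A \<and> B = A - {s} then F s A else 0)"
    by (rule sum.swap)
  also have "\<dots> = (\<Sum>s\<in>S. if s \<notin> B then F s (insert s B) else 0)"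
  proof (rule sum.cong[OF refl])
    fix s assume s: "s \<in> S"
    have "(\<Sum>A\<in>Pow S. if s \<in> A \<and> B = A - {s} then F s A else 0)
        = (\<Sum>A\<in>Pow S. if A = insert s B then (if s \<notin> B then F s (insert s B) else 0) else 0)"
      by (rule sum.cong[OF refl]) auto
    also have "\<dots> = (if s \<notin> B then F s (insert s B) else 0)"
      using fin s True by simp
    finally show "(\<Sum>A\<in>Pow S. if s \<in> A \<and> B = A - {s} then F s A else 0) = (if s \<notin> B then F s (insert s B) else 0)" .
  qed
  also have "\<dots> = (\<Sum>s\<in>{s\<in>S. s \<notin> B}. F s (insert s B))"
    using fin by (rule sum.inter_filter[symmetric])
  also have "{s\<in>S. s \<notin> B} = S - B" by auto
  finally show ?thesis using True by simp
qed

lemma scarf_diff_conv: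
  fixes S :: "('v::finite) expo set" and f :: "'v expo set \<Rightarrow> ('v, 'k::field) mpoly"
  assumes fin: "finite S" and f: "f \<in> scarf_mod S i"
  shows "scarf_diff S ord i f B = (if B \<subseteq> S then (\<Sum>s\<in>S - B.
      Poly_Mapping.single (mlcm (insert s B) - mlcm B) (sgn_in ord s (insert s B)) * f (insert s B)) else 0)"
proof -
  let ?F = "\<lambda>s A. Poly_Mapping.single 0 (sgn_in ord s A) * monom (mlcm A - mlcm (A - {s})) * f A"
  have "scarf_diff S ord i f B = (\<Sum>A\<in>{A\<in>scarf S. card A = i}. \<Sum>s\<in>A. if B = A - {s} then ?F s A else 0)"
    unfolding scarf_diff_def by simp
  also have "\<dots> = (\<Sum>A\<in>Pow S. \<Sum>s\<in>A. if B = A - {s} then ?F s A else 0)"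
  proof (rule sum.mono_neutral_left)
    show "finite (Pow S)" using fin by simp
    show "{A \<in> scarf S. card A = i} \<subseteq> Pow S" using scarf_sub by auto
    show "\<forall>A\<in>Pow S - {A \<in> scarf S. card A = i}. (\<Sum>s\<in>A. if B = A - {s} then ?F s A else 0) = 0"
    proof
      fix A assume "A \<in> Pow S - {A \<in> scarf S. card A = i}"
      then have "f A = 0" using f unfolding scarf_mod_def by auto
      then show "(\<Sum>s\<in>A. if B = A - {s} then ?F s A else 0) = 0" by (intro sum.neutral) simp
    qed
  qed
  also have "\<dots> = (if B \<subseteq> S then (\<Sum>s\<in>S - B. ?F s (insert s B)) else 0)"
    by (rule pow_sum_conv[OF fin])
  also have "\<dots> = (if B \<subseteq> S then (\<Sum>s\<in>S - B.
      Poly_Mapping.single (mlcm (insert s B) - mlcm B) (sgn_in ord s (insert s B)) * f (insert s B)) else 0)"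
  proof (cases "B \<subseteq> S")
    case True
    have eq: "?F s (insert s B) = Poly_Mapping.single (mlcm (insert s B) - mlcm B) (sgn_in ord s (insert s B)) * f (insert s B)"
      if "s \<in> S - B" for s
      using that by (simp add: monom_def mult_single)
    show ?thesis using True by (simp only: if_True) (rule sum.cong[OF refl], rule eq)
  qed simp
  finally show ?thesis .
qed



lemma cf_zero [simp]: "cf (\<lambda>_. 0 :: ('v::finite, 'k::field) mpoly) \<beta> = (\<lambda>_. 0)"
  by (simp add: cf_def fun_eq_iff)

lemma cf_scarf_diff:
  fixes S :: "('v::finite) expo set" and f :: "'v expo set \<Rightarrow> ('v, 'k::field) mpoly"
  assumes fin: "finite S" and f: "f \<in> scarf_mod S i"
  shows "cf (scarf_diff S ord i f) \<beta> B = kd S ord (cf f \<beta>) B"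
proof (cases "B \<subseteq> S")
  case False
  then show ?thesis unfolding scarf_diff_conv[OF fin f] by (simp add: cf_def kd_def)
next
  case True
  have finB: "finite B" using True fin finite_subset by blast
  have m: "mdvd (mlcm B) (mlcm (insert s B))" for s using finB by (intro mlcm_mono) auto
  show ?thesis
  proof (cases "mdvd (mlcm B) \<beta>")
    case False
    have "cf f \<beta> (insert s B) = 0" for s
      using False mdvd_trans[OF m] unfolding cf_def by auto
    then show ?thesis using False True by (simp add: cf_def kd_def)
  next
    case mb: True
    have "cf (scarf_diff S ord i f) \<beta> B = (\<Sum>s\<in>S - B. Poly_Mapping.lookup
        (Poly_Mapping.single (mlcm (insert s B) - mlcm B) (sgn_in ord s (insert s B)) * f (insert s B))
        (\<beta> - mlcm B))"
      unfolding scarf_diff_conv[OF fin f] cf_def using True mb by (simp add: lookup_sum)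
    also have "\<dots> = (\<Sum>s\<in>S - B. sgn_in ord s (insert s B) * cf f \<beta> (insert s B))"
    proof (rule sum.cong[OF refl])
      fix s
      show "Poly_Mapping.lookup
        (Poly_Mapping.single (mlcm (insert s B) - mlcm B) (sgn_in ord s (insert s B)) * f (insert s B))
        (\<beta> - mlcm B) = sgn_in ord s (insert s B) * cf f \<beta> (insert s B)"
        unfolding lookup_single_mult cf_def pm_sub1[OF m mb]
        by (simp add: pm_sub2[OF m])
    qed
    also have "\<dots> = kd S ord (cf f \<beta>) B" using True by (simp add: kd_def)
    finally show ?thesis .
  qed
qed

lemma sd_mod:
  fixes S :: "('v::finite) expo set" and f :: "'v expo set \<Rightarrow> ('v, 'k::field) mpoly"
  assumes fin: "finite S" and f: "f \<in> scarf_mod S (Suc i)"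
  shows "scarf_diff S ord (Suc i) f \<in> scarf_mod S i"
  unfolding scarf_mod_def mem_Collect_eq
proof (intro allI impI)
  fix B assume nz: "scarf_diff S ord (Suc i) f B \<noteq> 0"
  then have BS: "B \<subseteq> S" unfolding scarf_diff_conv[OF fin f] by (auto split: if_splits)
  then have "(\<Sum>s\<in>S - B. Poly_Mapping.single (mlcm (insert s B) - mlcm B) (sgn_in ord s (insert s B)) * f (insert s B)) \<noteq> 0"
    using nz unfolding scarf_diff_conv[OF fin f] by simp
  then obtain s where s: "s \<in> S - B"
    "Poly_Mapping.single (mlcm (insert s B) - mlcm B) (sgn_in ord s (insert s B)) * f (insert s B) \<noteq> 0"
    by (meson sum.neutral)
  then have "f (insert s B) \<noteq> 0" by auto
  then have "insert s B \<in> scarf S" "card (insert s B) = Suc i" using f unfolding scarf_mod_def by auto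
  moreover have "finite B" using BS fin finite_subset by blast
  ultimately show "B \<in> scarf S \<and> card B = i"
    using scarf_down[OF fin _ subset_insertI] s by auto
qed

lemma sd_sd:
  fixes S :: "('v::finite) expo set" and f :: "'v expo set \<Rightarrow> ('v, 'k::field) mpoly"
  assumes fin: "finite S" and inj: "inj_on ord S" and f: "f \<in> scarf_mod S (Suc i)"
  shows "scarf_diff S ord i (scarf_diff S ord (Suc i) f) = (\<lambda>_. 0)"
proof (rule cf_inj)
  fix \<beta> A
  have e: "cf (scarf_diff S ord (Suc i) f) \<beta> = kd S ord (cf f \<beta>)"
    by (intro ext cf_scarf_diff[OF fin f])
  show "cf (scarf_diff S ord i (scarf_diff S ord (Suc i) f)) \<beta> A = cf (\<lambda>_. 0) \<beta> A"
    unfolding cf_scarf_diff[OF fin sd_mod[OF fin f]] e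
    using kd_kd[OF fin inj] by simp
qed



lemma ker_sub_im:
  fixes S :: "('v::finite) expo set" and z :: "'v expo set \<Rightarrow> ('v, 'k::field) mpoly"
  assumes fin: "finite S" and z0: "0 \<notin> S" and inj: "inj_on ord S" and gen: "generic_type S"
    and i: "i \<ge> 1" and z: "z \<in> scarf_mod S i" and dz: "scarf_diff S ord i z = (\<lambda>_. 0)"
  shows "\<exists>w\<in>scarf_mod S (Suc i). scarf_diff S ord (Suc i) w = z"
proof -
  have zD: "z A \<noteq> 0 \<Longrightarrow> A \<in> scarf S \<and> card A = i" for A using z unfolding scarf_mod_def by auto
  have cz: "cf z \<beta> \<in> chains (Kn S \<beta> 0) i" for \<beta>
    unfolding chains_def mem_Collect_eq
  proof (intro allI impI)
    fix A assume "cf z \<beta> A \<noteq> 0"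
    then have "mdvd (mlcm A) \<beta>" "z A \<noteq> 0" unfolding cf_def by (auto split: if_splits)
    then show "A \<in> Kn S \<beta> 0 \<and> card A = i" using zD scarf_sub unfolding Kn_def by blast
  qed
  have kz: "kd S ord (cf z \<beta>) = (\<lambda>_. 0)" for \<beta>
  proof
    fix B
    have "kd S ord (cf z \<beta>) B = cf (scarf_diff S ord i z) \<beta> B" by (rule cf_scarf_diff[OF fin z, symmetric])
    then show "kd S ord (cf z \<beta>) B = 0" unfolding dz by simp
  qed
  have "\<forall>\<beta>. \<exists>g. g \<in> chains (Kn S \<beta> 0) (Suc i) \<and> kd S ord g = cf z \<beta>"
  proof
    fix \<beta>
    have "exact_at S ord (Kn S \<beta> 0) i TYPE('k)" by (rule scarf_beta_exact[OF fin z0 inj gen i])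
    then show "\<exists>g. g \<in> chains (Kn S \<beta> 0) (Suc i) \<and> kd S ord g = cf z \<beta>"
      using cz kz unfolding exact_at_def by blast
  qed
  then obtain G where G: "\<And>\<beta>. G \<beta> \<in> chains (Kn S \<beta> 0) (Suc i)" "\<And>\<beta>. kd S ord (G \<beta>) = cf z \<beta>"
    by metis
  have GD: "G \<beta> A \<noteq> 0 \<Longrightarrow> A \<in> scarf S \<and> card A = Suc i \<and> mdvd (mlcm A) \<beta>" for \<beta> A
    using chainsD[OF G(1)] unfolding Kn_def by blast
  define Bs where "Bs = (\<lambda>(A, \<gamma>). \<gamma> + mlcm A) ` (SIGMA A:Pow S. Poly_Mapping.keys (z A))"
  have finBs: "finite Bs" unfolding Bs_def using fin by auto
  define w where "w = (\<lambda>A. \<Sum>\<beta>\<in>Bs. Poly_Mapping.single (\<beta> - mlcm A) (G \<beta> A))"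
  have wmod: "w \<in> scarf_mod S (Suc i)"
    unfolding scarf_mod_def mem_Collect_eq
  proof (intro allI impI)
    fix A assume "w A \<noteq> 0"
    then obtain \<beta> where "Poly_Mapping.single (\<beta> - mlcm A) (G \<beta> A) \<noteq> 0"
      unfolding w_def by (meson sum.neutral)
    then have "G \<beta> A \<noteq> 0" by auto
    then show "A \<in> scarf S \<and> card A = Suc i" using GD by blast
  qed
  have cw: "cf w \<beta>' A = (if \<beta>' \<in> Bs then G \<beta>' A else 0)" for \<beta>' A
  proof (cases "mdvd (mlcm A) \<beta>'")
    case True
    have "cf w \<beta>' A = (\<Sum>\<beta>\<in>Bs. Poly_Mapping.lookup (Poly_Mapping.single (\<beta> - mlcm A) (G \<beta> A)) (\<beta>' - mlcm A))"
      unfolding cf_def w_def using True by (simp add: lookup_sum)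
    also have "\<dots> = (\<Sum>\<beta>\<in>Bs. if \<beta> = \<beta>' then G \<beta> A else 0)"
    proof (rule sum.cong[OF refl])
      fix \<beta>
      show "Poly_Mapping.lookup (Poly_Mapping.single (\<beta> - mlcm A) (G \<beta> A)) (\<beta>' - mlcm A) = (if \<beta> = \<beta>' then G \<beta> A else 0)"
      proof (cases "G \<beta> A = 0")
        case False
        then have "mdvd (mlcm A) \<beta>" using GD by blast
        then have "\<beta> - mlcm A = \<beta>' - mlcm A \<longleftrightarrow> \<beta> = \<beta>'" using pm_diff_inj True by blast
        then show ?thesis by (simp add: lookup_single when_def)
      qed auto
    qed
    also have "\<dots> = (if \<beta>' \<in> Bs then G \<beta>' A else 0)" using finBs by simp
    finally show ?thesis .
  next
    case False
    then have "G \<beta>' A = 0" using GD by blast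
    then show ?thesis using False by (simp add: cf_def)
  qed
  have "scarf_diff S ord (Suc i) w = z"
  proof (rule cf_inj)
    fix \<beta> B
    have "cf (scarf_diff S ord (Suc i) w) \<beta> B = kd S ord (cf w \<beta>) B" by (rule cf_scarf_diff[OF fin wmod])
    also have "\<dots> = cf z \<beta> B"
    proof (cases "\<beta> \<in> Bs")
      case True
      then have "cf w \<beta> = G \<beta>" using cw by (simp add: fun_eq_iff)
      then show ?thesis using G(2) by simp
    next
      case False
      then have "cf w \<beta> = (\<lambda>_. 0)" using cw by (simp add: fun_eq_iff)
      moreover have "cf z \<beta> B = 0"
      proof (rule ccontr)
        assume nz: "cf z \<beta> B \<noteq> 0"
        then have mb: "mdvd (mlcm B) \<beta>" and l: "Poly_Mapping.lookup (z B) (\<beta> - mlcm B) \<noteq> 0"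
          unfolding cf_def by (auto split: if_splits)
        then have "z B \<noteq> 0" by auto
        then have "B \<in> Pow S" using zD scarf_sub by blast
        moreover have "\<beta> - mlcm B \<in> Poly_Mapping.keys (z B)" using l by (simp add: in_keys_iff)
        ultimately have "(\<beta> - mlcm B) + mlcm B \<in> Bs" unfolding Bs_def by force
        then show False using False pm_diff_add[OF mb] by simp
      qed
      ultimately show ?thesis by simp
    qed
    finally show "cf (scarf_diff S ord (Suc i) w) \<beta> B = cf z \<beta> B" .
  qed
  then show ?thesis using wmod by blast
qed



lemma sd1_empty:
  fixes S :: "('v::finite) expo set" and w :: "'v expo set \<Rightarrow> ('v, 'k::field) mpoly"
  assumes fin: "finite S" and w: "w \<in> scarf_mod S 1"
  shows "scarf_diff S ord 1 w {} = (\<Sum>s\<in>S. w {s} * monom s)"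
proof -
  have "sgn_in ord s {s} = (1::'k)" for s
  proof -
    have "{t \<in> {s}. ord t < ord s} = {}" by auto
    then show ?thesis unfolding sgn_in_def by (simp only: card.empty power_0)
  qed
  then show ?thesis unfolding scarf_diff_conv[OF fin w]
    by (simp add: monom_def mult.commute)
qed

lemma sd1_nonempty:
  fixes S :: "('v::finite) expo set" and w :: "'v expo set \<Rightarrow> ('v, 'k::field) mpoly"
  assumes fin: "finite S" and w: "w \<in> scarf_mod S 1" and B: "B \<noteq> {}"
  shows "scarf_diff S ord 1 w B = 0"
proof (cases "B \<subseteq> S")
  case True
  have finB: "finite B" using True fin finite_subset by blast
  have "w (insert s B) = 0" if "s \<in> S - B" for s
  proof -
    have "card (insert s B) = Suc (card B)" using that finB by simp
    moreover have "card B \<noteq> 0" using finB B by simp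
    ultimately have "card (insert s B) \<noteq> 1" by simp
    then show ?thesis using w unfolding scarf_mod_def by auto
  qed
  then show ?thesis unfolding scarf_diff_conv[OF fin w] using True by simp
next
  case False
  then show ?thesis unfolding scarf_diff_conv[OF fin w] by simp
qed

lemma scarf_mod0_D:
  fixes S :: "('v::finite) expo set" and f :: "'v expo set \<Rightarrow> ('v, 'k::field) mpoly"
  assumes fin: "finite S" and f: "f \<in> scarf_mod S 0" and nz: "f B \<noteq> 0"
  shows "B = {}"
proof -
  have "B \<in> scarf S" "card B = 0" using f nz unfolding scarf_mod_def by auto
  moreover have "finite B" using calculation(1) scarf_sub fin finite_subset by blast
  ultimately show ?thesis by simp
qed

lemma augmentation:
  fixes S :: "('v::finite) expo set"
  assumes mg: "minimal_mon_gens S" and z0: "0 \<notin> S"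
  shows "{f \<in> scarf_mod S 0. f {} \<in> (mon_ideal S :: ('v, 'k::field) mpoly set)}
       = scarf_diff S ord 1 ` (scarf_mod S 1 :: ('v expo set \<Rightarrow> ('v, 'k) mpoly) set)"
proof -
  have fin: "finite S" using mg by (simp add: minimal_mon_gens_def)
  show ?thesis
  proof (intro equalityI subsetI)
    fix f :: "'v expo set \<Rightarrow> ('v, 'k) mpoly"
    assume "f \<in> {f \<in> scarf_mod S 0. f {} \<in> mon_ideal S}"
    then have f: "f \<in> scarf_mod S 0" and fI: "f {} \<in> mon_ideal S" by auto
    obtain q where q: "f {} = (\<Sum>s\<in>S. q s * monom s)" using fI unfolding mon_ideal_def by blast
    define w :: "'v expo set \<Rightarrow> ('v, 'k) mpoly"
      where "w = (\<lambda>A. if A \<in> (\<lambda>s. {s}) ` S then q (the_elem A) else 0)"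
    have wmod: "w \<in> scarf_mod S 1"
      unfolding scarf_mod_def mem_Collect_eq
    proof (intro allI impI)
      fix A assume "w A \<noteq> 0"
      then obtain s where "s \<in> S" "A = {s}" unfolding w_def by (auto split: if_splits)
      then show "A \<in> scarf S \<and> card A = 1" using single_scarf[OF mg z0] by auto
    qed
    have "scarf_diff S ord 1 w = f"
    proof
      fix B show "scarf_diff S ord 1 w B = f B"
      proof (cases "B = {}")
        case True
        have "w {s} = q s" if "s \<in> S" for s using that unfolding w_def by auto
        then have "(\<Sum>s\<in>S. w {s} * monom s) = (\<Sum>s\<in>S. q s * monom s)" by simp
        then show ?thesis using True sd1_empty[OF fin wmod] q by simp
      next
        case False
        then have "f B = 0" using scarf_mod0_D[OF fin f] by blast
        then show ?thesis using sd1_nonempty[OF fin wmod False] by simp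
      qed
    qed
    then show "f \<in> scarf_diff S ord 1 ` scarf_mod S 1" using wmod by blast
  next
    fix f :: "'v expo set \<Rightarrow> ('v, 'k) mpoly"
    assume "f \<in> scarf_diff S ord 1 ` scarf_mod S 1"
    then obtain w where w: "w \<in> scarf_mod S 1" and fw: "f = scarf_diff S ord 1 w" by blast
    have "f \<in> scarf_mod S 0"
      unfolding scarf_mod_def mem_Collect_eq
    proof (intro allI impI)
      fix B assume "f B \<noteq> 0"
      then have "B = {}" using sd1_nonempty[OF fin w] fw by blast
      then show "B \<in> scarf S \<and> card B = 0" using empty_scarf[OF fin z0] by simp
    qed
    moreover have "f {} \<in> mon_ideal S"
      unfolding mon_ideal_def fw sd1_empty[OF fin w]
      by (rule CollectI, rule exI[of _ "\<lambda>s. w {s}"]) simp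
    ultimately show "f \<in> {f \<in> scarf_mod S 0. f {} \<in> mon_ideal S}" by blast
  qed
qed

lemma minimality:
  fixes S :: "('v::finite) expo set" and f :: "'v expo set \<Rightarrow> ('v, 'k::field) mpoly"
  assumes fin: "finite S" and f: "f \<in> scarf_mod S (Suc i)"
  shows "Poly_Mapping.lookup (scarf_diff S ord (Suc i) f B) 0 = 0"
proof (cases "B \<subseteq> S")
  case False
  then show ?thesis unfolding scarf_diff_conv[OF fin f] by simp
next
  case True
  have finB: "finite B" using True fin finite_subset by blast
  have "Poly_Mapping.lookup (Poly_Mapping.single (mlcm (insert s B) - mlcm B) (sgn_in ord s (insert s B)) * f (insert s B)) 0 = 0"
    if s: "s \<in> S - B" for s
  proof (cases "mdvd (mlcm (insert s B) - mlcm B) 0")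
    case True
    then have "mlcm (insert s B) - mlcm B = 0" by (rule pm_mdvd_zero)
    then have "mdvd (mlcm (insert s B)) (mlcm B)" by (rule pm_zero_mdvd)
    moreover have "mdvd (mlcm B) (mlcm (insert s B))" using finB by (intro mlcm_mono) auto
    ultimately have e: "mlcm B = mlcm (insert s B)" by (intro mdvd_antisym)
    have "f (insert s B) = 0"
    proof (rule ccontr)
      assume "f (insert s B) \<noteq> 0"
      then have "insert s B \<in> scarf S" using f unfolding scarf_mod_def by auto
      then have "\<forall>C. C \<subseteq> S \<and> C \<noteq> insert s B \<longrightarrow> mlcm C \<noteq> mlcm (insert s B)"
        by (simp add: scarf_def)
      then have "B \<subseteq> S \<and> B \<noteq> insert s B \<longrightarrow> mlcm B \<noteq> mlcm (insert s B)" by (rule spec)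
      moreover have "B \<noteq> insert s B" using s by blast
      ultimately show False using e \<open>B \<subseteq> S\<close> by simp
    qed
    then show ?thesis by simp
  next
    case False
    then show ?thesis by (simp add: lookup_single_mult)
  qed
  then show ?thesis unfolding scarf_diff_conv[OF fin f] using True by (simp add: lookup_sum)
qed

theorem corollary2p6:
  fixes S :: "('v::finite) expo set"
    and ord :: "'v expo \<Rightarrow> nat"
  assumes "minimal_mon_gens S"
    and "0 \<notin> S"
    and "inj_on ord S"
    and "generic_type S"
  shows "scarf_is_min_resolution TYPE('k::field) S ord"
proof -
  have fin: "finite S" using assms(1) by (simp add: minimal_mon_gens_def)
  have ex: "{f \<in> (scarf_mod S i :: ('v expo set \<Rightarrow> ('v, 'k) mpoly) set). scarf_diff S ord i f = (\<lambda>_. 0)}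
             = scarf_diff S ord (Suc i) ` scarf_mod S (Suc i)" if i: "i \<ge> 1" for i
  proof (intro equalityI subsetI)
    fix z :: "'v expo set \<Rightarrow> ('v, 'k) mpoly"
    assume "z \<in> {f \<in> scarf_mod S i. scarf_diff S ord i f = (\<lambda>_. 0)}"
    then have "z \<in> scarf_mod S i" "scarf_diff S ord i z = (\<lambda>_. 0)" by auto
    then show "z \<in> scarf_diff S ord (Suc i) ` scarf_mod S (Suc i)"
      using ker_sub_im[OF fin assms(2,3,4) i] by blast
  next
    fix z :: "'v expo set \<Rightarrow> ('v, 'k) mpoly"
    assume "z \<in> scarf_diff S ord (Suc i) ` scarf_mod S (Suc i)"
    then obtain w where w: "w \<in> scarf_mod S (Suc i)" "z = scarf_diff S ord (Suc i) w" by blast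
    then show "z \<in> {f \<in> scarf_mod S i. scarf_diff S ord i f = (\<lambda>_. 0)}"
      using sd_mod[OF fin w(1)] sd_sd[OF fin assms(3) w(1)] by blast
  qed
  show ?thesis
    unfolding scarf_is_min_resolution_def
  proof (intro conjI allI impI ballI)
    show "{} \<in> scarf S" by (rule empty_scarf[OF fin assms(2)])
    show "{f \<in> scarf_mod S 0. f {} \<in> (mon_ideal S :: ('v, 'k) mpoly set)}
       = scarf_diff S ord 1 ` (scarf_mod S 1 :: ('v expo set \<Rightarrow> ('v, 'k) mpoly) set)"
      by (rule augmentation[OF assms(1,2)])
  next
    fix i :: nat assume "1 \<le> i"
    then show "{f \<in> (scarf_mod S i :: ('v expo set \<Rightarrow> ('v, 'k) mpoly) set). scarf_diff S ord i f = (\<lambda>_. 0)}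
             = scarf_diff S ord (Suc i) ` scarf_mod S (Suc i)" by (rule ex)
  next
    fix i B and f :: "'v expo set \<Rightarrow> ('v, 'k) mpoly" assume "f \<in> scarf_mod S (Suc i)"
    then show "Poly_Mapping.lookup (scarf_diff S ord (Suc i) f B) 0 = 0" by (rule minimality[OF fin])
  qed
qed


end
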